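(* Let $q=p_1p_2$ with $p_1\neq p_2$ odd primes. Consider the map $\mathcal S$ sending a pair of integers $(q_1,q_2)$ with $q_1,q_2,q_1+q_2,q_1-q_2$ all $\not\equiv 0\pmod q$ to the triple of polynomials $\mathcal S(q_1,q_2)=(\psi(q_1,q_2),\alpha(q_1,q_2),\beta(q_1,q_2))$. Then $\mathcal S$ takes at most $11$ distinct values.
   Context: Let $\gamma=e^{2\pi i/q}$. Let $A$ be the set of residues in $\{1,\dots,q-1\}$ coprime to $q$, $B=\{xp_1: x=1,\dots,p_2-1\}$ and $C=\{xp_2: x=1,\dots,p_1-1\}$. For a pair $(q_1,q_2)$ and a set $S\subset\{1,\dots,q-1\}$ put $\Pi_S(q_1,q_2)(z)=\sum_{l\in S}\prod_{i=1}^{2}(z-\gamma^{q_il})(z-\gamma^{-q_il})$; then $\psi=\Pi_A$, $\alpha=\Pi_B$, $\beta=\Pi_C$. *)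

theory Defs
  imports Complex_Main "HOL-Computational_Algebra.Polynomial" "HOL-Computational_Algebra.Primes"
begin

text \<open>gamma^k for gamma = exp(2 pi i / q), integer exponent k\<close>
definition gam :: "nat \<Rightarrow> int \<Rightarrow> complex" where
  "gam q k = cis (2 * pi * of_int k / of_nat q)"

definition fac :: "nat \<Rightarrow> int \<Rightarrow> nat \<Rightarrow> complex poly" where
  "fac q a l = [:- gam q (a * int l), 1:] * [:- gam q (- (a * int l)), 1:]"

definition PiS :: "nat \<Rightarrow> nat set \<Rightarrow> int \<Rightarrow> int \<Rightarrow> complex poly" where
  "PiS q S q1 q2 = (\<Sum>l\<in>S. fac q q1 l * fac q q2 l)"

definition setA :: "nat \<Rightarrow> nat set" where
  "setA q = {l \<in> {1..q-1}. coprime l q}"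

definition setB :: "nat \<Rightarrow> nat \<Rightarrow> nat set" where
  "setB p1 p2 = (\<lambda>x. x * p1) ` {1..p2-1}"

definition setC :: "nat \<Rightarrow> nat \<Rightarrow> nat set" where
  "setC p1 p2 = (\<lambda>x. x * p2) ` {1..p1-1}"

definition Smap :: "nat \<Rightarrow> nat \<Rightarrow> int \<times> int \<Rightarrow> complex poly \<times> complex poly \<times> complex poly" where
  "Smap p1 p2 qq = (case qq of (q1, q2) \<Rightarrow>
     (PiS (p1*p2) (setA (p1*p2)) q1 q2,
      PiS (p1*p2) (setB p1 p2) q1 q2,
      PiS (p1*p2) (setC p1 p2) q1 q2))"

definition admissible :: "nat \<Rightarrow> int \<times> int \<Rightarrow> bool" where
  "admissible q qq = (case qq of (q1, q2) \<Rightarrow>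
     \<not> int q dvd q1 \<and> \<not> int q dvd q2 \<and> \<not> int q dvd (q1 + q2) \<and> \<not> int q dvd (q1 - q2))"

end

theory Submission imports Defs begin

lemma gam_mult: "gam q a * gam q b = gam q (a + b)"
  by (simp add: gam_def cis_mult add_divide_distrib distrib_left)

lemma gam_zero[simp]: "gam q 0 = 1" by (simp add: gam_def)

lemma geo_sum:
  assumes n: "n > 0" and d: "d > 0" and q: "q = n * d"
  shows "(\<Sum>x<n. gam q (k * int (x*d))) = (if int n dvd k then of_nat n else 0)"
proof -
  define z where "z = cis (2 * pi * of_int k / of_nat n)"
  have e: "gam q (k * int (x*d)) = z ^ x" for x
    unfolding z_def gam_def DeMoivre q using n d
    by (intro arg_cong[where f=cis]) (simp add: field_simps)
  have "z ^ n = cis (2 * pi * of_int k)" unfolding z_def DeMoivre using n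
    by (intro arg_cong[where f=cis]) (simp add: field_simps)
  then have zn: "z ^ n = 1" by simp
  show ?thesis
  proof (cases "int n dvd k")
    case True
    then obtain m where "k = int n * m" by blast
    then have "z = cis (2 * pi * of_int m)" unfolding z_def using n
      by (intro arg_cong[where f=cis]) (simp add: field_simps)
    then have "z = 1" by simp
    then show ?thesis using True unfolding e by simp
  next
    case False
    have "z \<noteq> 1"
    proof
      assume "z = 1"
      then have "cos (2 * pi * of_int k / of_nat n) = 1" unfolding z_def
        by (metis Re_complex_of_real cis.sel(1) of_real_1)
      then obtain m :: int where "2 * pi * of_int k / of_nat n = m * 2 * pi"
        by (auto simp: cos_one_2pi_int)
      then have "real_of_int k = real n * of_int m" using n by (simp add: field_simps)
      then have "k = int n * m" by (metis of_int_eq_iff of_int_mult of_int_of_nat_eq)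
      then show False using False by simp
    qed
    then show ?thesis using False zn unfolding e by (simp add: geometric_sum)
  qed
qed

definition sg :: "nat \<Rightarrow> int \<Rightarrow> complex" where
  "sg q x = gam q x + gam q (-x)"

lemma fac_eq: "fac q a l = [:1, - sg q (a * int l), 1:]"
proof -
  have "gam q (a * int l) * gam q (- (a * int l)) = 1" by (simp add: gam_mult)
  then show ?thesis by (simp add: fac_def sg_def algebra_simps)
qed

lemma sg_mult: "sg q x * sg q y = sg q (x + y) + sg q (x - y)"
proof -
  have "sg q x * sg q y = gam q x * gam q y + gam q x * gam q (-y) + gam q (-x) * gam q y + gam q (-x) * gam q (-y)"
    by (simp add: sg_def algebra_simps)
  also have "\<dots> = gam q (x+y) + gam q (x-y) + gam q (-(x-y)) + gam q (-(x+y))"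
    by (simp add: gam_mult)
  finally show ?thesis by (simp add: sg_def)
qed

lemma fac_prod: "fac q a l * fac q b l =
  [:1, - (sg q (a * int l) + sg q (b * int l)),
     2 + sg q ((a+b) * int l) + sg q ((a-b) * int l),
     - (sg q (a * int l) + sg q (b * int l)), 1:]"
proof -
  have "sg q (a * int l) * sg q (b * int l) = sg q ((a+b) * int l) + sg q ((a-b) * int l)"
    by (simp add: sg_mult algebra_simps)
  then show ?thesis unfolding fac_eq by (simp add: algebra_simps)
qed

lemma sum5: "(\<Sum>l\<in>S. [:f0 l, f1 l, f2 l, f3 l, f4 l:]) =
   [:sum f0 S, sum f1 S, sum f2 S, sum f3 S, sum f4 S:]"
proof (cases "finite S")
  case True
  then show ?thesis by (induction S rule: finite_induct) (auto simp: add_pCons)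
qed simp

definition W :: "nat \<Rightarrow> nat set \<Rightarrow> int \<Rightarrow> complex" where
  "W q S a = (\<Sum>l\<in>S. sg q (a * int l))"

lemma PiS_eq: "PiS q S a b = [:of_nat (card S), - (W q S a + W q S b),
   2 * of_nat (card S) + W q S (a+b) + W q S (a-b), - (W q S a + W q S b), of_nat (card S):]"
  unfolding PiS_def fac_prod sum5 W_def
  by (simp add: sum.distrib sum_negf sum_subtractf)

definition E :: "nat \<Rightarrow> nat set \<Rightarrow> int \<Rightarrow> complex" where
  "E q S a = (\<Sum>l\<in>S. gam q (a * int l))"

lemma W_E: "W q S a = E q S a + E q S (-a)"
  unfolding W_def E_def sg_def by (simp add: sum.distrib)

lemma E_mult:
  assumes "0 < a" "0 < b" "q = b * a"
  shows "E q ((\<lambda>x. x * a) ` {..<b}) k = (if int b dvd k then of_nat b else 0)"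
proof -
  have "inj_on (\<lambda>x. x * a) {..<b}" using assms by (auto simp: inj_on_def)
  then have "E q ((\<lambda>x. x * a) ` {..<b}) k = (\<Sum>x<b. gam q (k * int (x * a)))"
    unfolding E_def by (simp add: sum.reindex)
  also have "\<dots> = (if int b dvd k then of_nat b else 0)"
    by (rule geo_sum) (use assms in auto)
  finally show ?thesis .
qed

lemma E_mult1:
  assumes "0 < a" "0 < b" "q = b * a"
  shows "E q ((\<lambda>x. x * a) ` {1..b-1}) k = (if int b dvd k then of_nat b else 0) - 1"
proof -
  have "{..<b} = insert 0 {1..b-1}" using assms by auto
  then have "(\<lambda>x. x * a) ` {..<b} = insert 0 ((\<lambda>x. x * a) ` {1..b-1})" by simp
  moreover have "0 \<notin> (\<lambda>x. x * a) ` {1..b-1}" using assms by auto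
  ultimately have "E q ((\<lambda>x. x * a) ` {..<b}) k = 1 + E q ((\<lambda>x. x * a) ` {1..b-1}) k"
    unfolding E_def by simp
  then show ?thesis using E_mult[OF assms, of k] by simp
qed

lemma mults_eq:
  fixes a b :: nat
  assumes "0 < a" "0 < b"
  shows "(\<lambda>x. x * a) ` {1..b-1} = {l \<in> {1..a*b-1}. a dvd l}"
proof
  show "(\<lambda>x. x * a) ` {1..b-1} \<subseteq> {l \<in> {1..a*b-1}. a dvd l}"
  proof
    fix l assume "l \<in> (\<lambda>x. x * a) ` {1..b-1}"
    then obtain x where x: "1 \<le> x" "x \<le> b - 1" "l = x * a" by auto
    have "x * a \<le> (b-1) * a" using x(2) by (rule mult_le_mono1)
    also have "\<dots> = a * b - a" by (simp add: algebra_simps diff_mult_distrib)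
    finally have "l \<le> a*b - 1" using x assms by linarith
    moreover have "1 \<le> l" using x assms by simp
    ultimately show "l \<in> {l \<in> {1..a*b-1}. a dvd l}" using x by auto
  qed
next
  show "{l \<in> {1..a*b-1}. a dvd l} \<subseteq> (\<lambda>x. x * a) ` {1..b-1}"
  proof
    fix l assume l: "l \<in> {l \<in> {1..a*b-1}. a dvd l}"
    then obtain x where x: "l = a * x" by auto
    have "0 < a * b" using assms by simp
    moreover have "a * x \<le> a * b - 1" using l x by auto
    ultimately have "a * x < a * b" by linarith
    then have "x < b" by simp
    moreover have "x \<ge> 1" using l x by (cases x) auto
    ultimately have "x \<in> {1..b-1}" by auto
    then show "l \<in> (\<lambda>x. x * a) ` {1..b-1}" using x
      by (metis image_eqI mult.commute)
  qed
qed

lemma E_full: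
  assumes "0 < q"
  shows "E q {..<q} k = (if int q dvd k then of_nat q else 0)"
  using geo_sum[of q 1 q k] assms unfolding E_def by simp

lemma coprime_prime_iff: "prime (p::nat) \<Longrightarrow> coprime l p \<longleftrightarrow> \<not> p dvd l"
  by (metis coprime_commute prime_imp_coprime coprime_absorb_left not_prime_unit)

lemma E_decomp:
  assumes p1: "prime p1" and p2: "prime p2" and ne: "p1 \<noteq> p2"
  shows "E (p1*p2) {..<p1*p2} k = 1 + E (p1*p2) (setA (p1*p2)) k
     + E (p1*p2) (setB p1 p2) k + E (p1*p2) (setC p1 p2) k"
proof -
  define q where "q = p1 * p2"
  define U where "U = {1..q-1}"
  have p1g: "p1 > 1" and p2g: "p2 > 1" using p1 p2 prime_gt_1_nat by auto
  then have qpos: "q > 0" unfolding q_def by simp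
  have hA: "setA q = {l\<in>U. \<not> p1 dvd l \<and> \<not> p2 dvd l}"
    unfolding setA_def U_def q_def using p1 p2 by (auto simp: coprime_prime_iff)
  have hB: "setB p1 p2 = {l\<in>U. p1 dvd l}"
    unfolding setB_def U_def q_def using p1g p2g by (intro mults_eq) auto
  have hC: "setC p1 p2 = {l\<in>U. p2 dvd l}"
    unfolding setC_def U_def q_def using p1g p2g mults_eq[of p2 p1] by (simp add: mult.commute)
  have cop: "coprime p1 p2" using primes_coprime[OF p1 p2 ne] .
  have hBC: "setB p1 p2 \<inter> setC p1 p2 = {}"
  proof (rule ccontr)
    assume "setB p1 p2 \<inter> setC p1 p2 \<noteq> {}"
    then obtain l where l: "l \<in> U" "p1 dvd l" "p2 dvd l" unfolding hB hC by auto
    then have "q dvd l" unfolding q_def using cop by (simp add: divides_mult)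
    moreover have "0 < l" "l < q" using l qpos unfolding U_def by auto
    ultimately show False using dvd_imp_le by fastforce
  qed
  have hU: "U = setA q \<union> (setB p1 p2 \<union> setC p1 p2)" unfolding hA hB hC by auto
  have dA: "setA q \<inter> (setB p1 p2 \<union> setC p1 p2) = {}" unfolding hA hB hC by auto
  have fin: "finite (setA q)" "finite (setB p1 p2)" "finite (setC p1 p2)"
    unfolding hA hB hC U_def by auto
  have "{..<q} = insert 0 U" unfolding U_def using qpos by auto
  then have "E q {..<q} k = 1 + E q U k" unfolding E_def U_def by simp
  also have "E q U k = E q (setA q) k + E q (setB p1 p2) k + E q (setC p1 p2) k"
    unfolding hU E_def using fin dA hBC
    by (simp add: sum.union_disjoint)
  finally show ?thesis unfolding q_def by simp
qed

definition ty :: "nat \<Rightarrow> nat \<Rightarrow> int \<Rightarrow> bool \<times> bool" where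
  "ty p1 p2 k = (int p1 dvd k, int p2 dvd k)"

definition eB :: "nat \<Rightarrow> bool \<times> bool \<Rightarrow> complex" where
  "eB p2 t = (if snd t then of_nat p2 else 0) - 1"
definition eC :: "nat \<Rightarrow> bool \<times> bool \<Rightarrow> complex" where
  "eC p1 t = (if fst t then of_nat p1 else 0) - 1"
definition eA :: "nat \<Rightarrow> nat \<Rightarrow> bool \<times> bool \<Rightarrow> complex" where
  "eA p1 p2 t = (if fst t \<and> snd t then of_nat (p1*p2) else 0) - 1 - eB p2 t - eC p1 t"

lemma ty_neg[simp]: "ty p1 p2 (-k) = ty p1 p2 k" by (simp add: ty_def)

lemma E_vals:
  assumes p1: "prime p1" and p2: "prime p2" and ne: "p1 \<noteq> p2"
  shows "E (p1*p2) (setB p1 p2) k = eB p2 (ty p1 p2 k)"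
    "E (p1*p2) (setC p1 p2) k = eC p1 (ty p1 p2 k)"
    "E (p1*p2) (setA (p1*p2)) k = eA p1 p2 (ty p1 p2 k)"
proof -
  have p1g: "p1 > 1" and p2g: "p2 > 1" using p1 p2 prime_gt_1_nat by auto
  show b: "E (p1*p2) (setB p1 p2) k = eB p2 (ty p1 p2 k)"
    unfolding setB_def eB_def ty_def using p1g p2g
    by (subst E_mult1) (auto simp: mult.commute)
  show c: "E (p1*p2) (setC p1 p2) k = eC p1 (ty p1 p2 k)"
    unfolding setC_def eC_def ty_def using p1g p2g
    by (subst E_mult1) (auto simp: mult.commute)
  have cop: "coprime (int p1) (int p2)" using primes_coprime[OF p1 p2 ne] by simp
  have qd: "int (p1*p2) dvd k \<longleftrightarrow> int p1 dvd k \<and> int p2 dvd k"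
    using cop divides_mult[of "int p1" k "int p2"]
    by (auto intro: dvd_mult_left dvd_mult_right)
  have "E (p1*p2) {..<p1*p2} k = (if int (p1*p2) dvd k then of_nat (p1*p2) else 0)"
    using p1g p2g by (intro E_full) simp
  then show "E (p1*p2) (setA (p1*p2)) k = eA p1 p2 (ty p1 p2 k)"
    using E_decomp[OF p1 p2 ne, of k] b c qd unfolding eA_def ty_def
    by (simp add: algebra_simps)
qed

definition P5 :: "nat \<Rightarrow> complex \<Rightarrow> complex \<Rightarrow> complex poly" where
  "P5 n x y = [:of_nat n, - x, 2 * of_nat n + y, - x, of_nat n:]"

definition FF :: "nat \<Rightarrow> nat \<Rightarrow> (bool\<times>bool) \<times> (bool\<times>bool) \<times> (bool\<times>bool) \<times> (bool\<times>bool)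
   \<Rightarrow> complex poly \<times> complex poly \<times> complex poly" where
  "FF p1 p2 tt = (case tt of (t1, t2, t3, t4) \<Rightarrow>
     (P5 (card (setA (p1*p2))) (2 * eA p1 p2 t1 + 2 * eA p1 p2 t2) (2 * eA p1 p2 t3 + 2 * eA p1 p2 t4),
      P5 (card (setB p1 p2)) (2 * eB p2 t1 + 2 * eB p2 t2) (2 * eB p2 t3 + 2 * eB p2 t4),
      P5 (card (setC p1 p2)) (2 * eC p1 t1 + 2 * eC p1 t2) (2 * eC p1 t3 + 2 * eC p1 t4)))"

lemma FF_swap: "FF p1 p2 (t2, t1, t3, t4) = FF p1 p2 (t1, t2, t3, t4)"
  "FF p1 p2 (t1, t2, t4, t3) = FF p1 p2 (t1, t2, t3, t4)"
  by (simp_all add: FF_def add.commute)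

lemma Smap_eq:
  assumes p1: "prime p1" and p2: "prime p2" and ne: "p1 \<noteq> p2"
  shows "Smap p1 p2 (a, b) = FF p1 p2 (ty p1 p2 a, ty p1 p2 b, ty p1 p2 (a+b), ty p1 p2 (a-b))"
proof -
  have t1: "ty p1 p2 (b - a) = ty p1 p2 (a - b)"
    using ty_neg[of p1 p2 "a - b"] by simp
  have t2: "ty p1 p2 (- a - b) = ty p1 p2 (a + b)"
    using ty_neg[of p1 p2 "a + b"] by simp
  show ?thesis
    unfolding Smap_def FF_def PiS_eq W_E E_vals[OF assms] P5_def
    by (simp add: algebra_simps t1 t2)
qed

definition K11 :: "((bool\<times>bool) \<times> (bool\<times>bool) \<times> (bool\<times>bool) \<times> (bool\<times>bool)) list" where
  "K11 = (let N = (False, False); P = (True, False); Q = (False, True) in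
     [(P,P,P,P), (Q,Q,Q,Q), (N,N,N,N), (P,N,N,N), (Q,N,N,N), (N,N,P,N), (N,N,Q,N),
      (P,Q,N,N), (N,N,P,Q), (P,N,Q,N), (Q,N,P,N)])"

lemma pat:
  assumes "a1 \<and> a2 \<longrightarrow> a3 \<and> a4" "a1 \<and> a3 \<longrightarrow> a2" "a2 \<and> a3 \<longrightarrow> a1"
    "a1 \<and> a4 \<longrightarrow> a2" "a2 \<and> a4 \<longrightarrow> a1" "a3 \<and> a4 \<longrightarrow> a1"
  shows "(a1 \<and> a2 \<and> a3 \<and> a4) \<or> (\<not>a1 \<and> \<not>a2 \<and> \<not>a3 \<and> \<not>a4) \<or> (a1 \<and> \<not>a2 \<and> \<not>a3 \<and> \<not>a4)
    \<or> (\<not>a1 \<and> a2 \<and> \<not>a3 \<and> \<not>a4) \<or> (\<not>a1 \<and> \<not>a2 \<and> a3 \<and> \<not>a4) \<or> (\<not>a1 \<and> \<not>a2 \<and> \<not>a3 \<and> a4)"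
  using assms by blast

lemma comb:
  assumes "a1 \<and> a2 \<longrightarrow> a3 \<and> a4" "a1 \<and> a3 \<longrightarrow> a2" "a2 \<and> a3 \<longrightarrow> a1"
    "a1 \<and> a4 \<longrightarrow> a2" "a2 \<and> a4 \<longrightarrow> a1" "a3 \<and> a4 \<longrightarrow> a1"
    "b1 \<and> b2 \<longrightarrow> b3 \<and> b4" "b1 \<and> b3 \<longrightarrow> b2" "b2 \<and> b3 \<longrightarrow> b1"
    "b1 \<and> b4 \<longrightarrow> b2" "b2 \<and> b4 \<longrightarrow> b1" "b3 \<and> b4 \<longrightarrow> b1"
    "\<not> (a1 \<and> b1)" "\<not> (a2 \<and> b2)" "\<not> (a3 \<and> b3)" "\<not> (a4 \<and> b4)"
  shows "((a1,b1),(a2,b2),(a3,b3),(a4,b4)) \<in> set K11 \<or> ((a2,b2),(a1,b1),(a3,b3),(a4,b4)) \<in> set K11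
     \<or> ((a1,b1),(a2,b2),(a4,b4),(a3,b3)) \<in> set K11 \<or> ((a2,b2),(a1,b1),(a4,b4),(a3,b3)) \<in> set K11"
proof -
  have e: "x \<in> set K11 \<longleftrightarrow> x \<in> {((True,False),(True,False),(True,False),(True,False)),
   ((False,True),(False,True),(False,True),(False,True)), ((False,False),(False,False),(False,False),(False,False)),
   ((True,False),(False,False),(False,False),(False,False)), ((False,True),(False,False),(False,False),(False,False)),
   ((False,False),(False,False),(True,False),(False,False)), ((False,False),(False,False),(False,True),(False,False)),
   ((True,False),(False,True),(False,False),(False,False)), ((False,False),(False,False),(True,False),(False,True)),
   ((True,False),(False,False),(False,True),(False,False)), ((False,True),(False,False),(True,False),(False,False))}" for x
    unfolding K11_def Let_def by simp
  from pat[OF assms(1-6)] pat[OF assms(7-12)] show ?thesis unfolding e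
    using assms(13-16) by (elim disjE; simp)
qed



lemma dvd_facts:
  fixes p :: nat and x y :: int
  assumes pp: "prime p" and op: "odd p"
  shows "(int p dvd x \<and> int p dvd y \<longrightarrow> int p dvd (x+y) \<and> int p dvd (x-y)) \<and>
    (int p dvd x \<and> int p dvd (x+y) \<longrightarrow> int p dvd y) \<and>
    (int p dvd y \<and> int p dvd (x+y) \<longrightarrow> int p dvd x) \<and>
    (int p dvd x \<and> int p dvd (x-y) \<longrightarrow> int p dvd y) \<and>
    (int p dvd y \<and> int p dvd (x-y) \<longrightarrow> int p dvd x) \<and>
    (int p dvd (x+y) \<and> int p dvd (x-y) \<longrightarrow> int p dvd x)"
proof -
  have pr: "prime (int p)" using pp by simp
  have n2: "\<not> int p dvd 2"
  proof
    assume "int p dvd 2"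
    then have "int p dvd int 2" by simp
    then have "p dvd 2" by (simp only: int_dvd_int_iff)
    then have "p \<le> 2" by (simp add: dvd_imp_le)
    moreover have "p > 1" using pp prime_gt_1_nat by auto
    ultimately have "p = 2" by linarith
    then show False using op by simp
  qed
  have 1: "int p dvd x" if "int p dvd (x+y)" "int p dvd (x-y)"
  proof -
    have "int p dvd ((x+y) + (x-y))" using that by (rule dvd_add)
    moreover have "(x+y) + (x-y) = 2 * x" by simp
    ultimately have "int p dvd 2 * x" by simp
    then show ?thesis using pr n2 prime_dvd_mult_iff by blast
  qed
  have 2: "int p dvd y" if "int p dvd x" "int p dvd (x+y)"
  proof -
    have "int p dvd (x+y) - x" using that(2,1) by (rule dvd_diff)
    then show ?thesis by simp
  qed
  have 3: "int p dvd x" if "int p dvd y" "int p dvd (x+y)"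
  proof -
    have "int p dvd (x+y) - y" using that(2,1) by (rule dvd_diff)
    then show ?thesis by simp
  qed
  have 4: "int p dvd y" if "int p dvd x" "int p dvd (x-y)"
  proof -
    have "int p dvd x - (x-y)" using that by (rule dvd_diff)
    moreover have "x - (x-y) = y" by simp
    ultimately show ?thesis by metis
  qed
  have 5: "int p dvd x" if "int p dvd y" "int p dvd (x-y)"
  proof -
    have "int p dvd (x-y) + y" using that(2,1) by (rule dvd_add)
    then show ?thesis by simp
  qed
  have 6: "int p dvd (x+y) \<and> int p dvd (x-y)" if "int p dvd x" "int p dvd y"
    using that by (simp add: dvd_add dvd_diff)
  show ?thesis using 1 2 3 4 5 6 by blast
qed

theorem proposition3p1p3:
  fixes p1 p2 :: nat
  assumes "prime p1" and "prime p2" and "odd p1" and "odd p2" and "p1 \<noteq> p2"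
  shows "finite (Smap p1 p2 ` {qq. admissible (p1*p2) qq})
         \<and> card (Smap p1 p2 ` {qq. admissible (p1*p2) qq}) \<le> 11"
proof -
  have cop: "coprime (int p1) (int p2)" using primes_coprime[OF assms(1,2,5)] by simp
  have qd: "int (p1*p2) dvd k \<longleftrightarrow> int p1 dvd k \<and> int p2 dvd k" for k
    using cop divides_mult[of "int p1" k "int p2"]
    by (auto intro: dvd_mult_left dvd_mult_right)
  have sub: "Smap p1 p2 ` {qq. admissible (p1*p2) qq} \<subseteq> FF p1 p2 ` set K11"
  proof
    fix v assume "v \<in> Smap p1 p2 ` {qq. admissible (p1*p2) qq}"
    then obtain x y where adm: "admissible (p1*p2) (x, y)" and v: "v = Smap p1 p2 (x, y)" by auto
    have v': "v = FF p1 p2 (ty p1 p2 x, ty p1 p2 y, ty p1 p2 (x+y), ty p1 p2 (x-y))"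
      unfolding v using Smap_eq[OF assms(1,2,5)] .
    define a1 where "a1 = (int p1 dvd x)"
    define a2 where "a2 = (int p1 dvd y)"
    define a3 where "a3 = (int p1 dvd (x+y))"
    define a4 where "a4 = (int p1 dvd (x-y))"
    define b1 where "b1 = (int p2 dvd x)"
    define b2 where "b2 = (int p2 dvd y)"
    define b3 where "b3 = (int p2 dvd (x+y))"
    define b4 where "b4 = (int p2 dvd (x-y))"
    have D1: "(a1 \<and> a2 \<longrightarrow> a3 \<and> a4) \<and> (a1 \<and> a3 \<longrightarrow> a2) \<and> (a2 \<and> a3 \<longrightarrow> a1) \<and>
    (a1 \<and> a4 \<longrightarrow> a2) \<and> (a2 \<and> a4 \<longrightarrow> a1) \<and> (a3 \<and> a4 \<longrightarrow> a1)"
      unfolding a1_def a2_def a3_def a4_def by (rule dvd_facts[OF assms(1,3)])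
    have D2: "(b1 \<and> b2 \<longrightarrow> b3 \<and> b4) \<and> (b1 \<and> b3 \<longrightarrow> b2) \<and> (b2 \<and> b3 \<longrightarrow> b1) \<and>
    (b1 \<and> b4 \<longrightarrow> b2) \<and> (b2 \<and> b4 \<longrightarrow> b1) \<and> (b3 \<and> b4 \<longrightarrow> b1)"
      unfolding b1_def b2_def b3_def b4_def by (rule dvd_facts[OF assms(2,4)])
    have N: "\<not> (a1 \<and> b1)" "\<not> (a2 \<and> b2)" "\<not> (a3 \<and> b3)" "\<not> (a4 \<and> b4)"
      using adm unfolding admissible_def qd a1_def a2_def a3_def a4_def b1_def b2_def b3_def b4_def
      by simp_all
    have c: "((a1,b1),(a2,b2),(a3,b3),(a4,b4)) \<in> set K11 \<or> ((a2,b2),(a1,b1),(a3,b3),(a4,b4)) \<in> set K11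
     \<or> ((a1,b1),(a2,b2),(a4,b4),(a3,b3)) \<in> set K11 \<or> ((a2,b2),(a1,b1),(a4,b4),(a3,b3)) \<in> set K11"
      by (rule comb) (use D1 D2 N in blast)+
    have v'': "v = FF p1 p2 ((a1,b1),(a2,b2),(a3,b3),(a4,b4))"
      unfolding v' ty_def a1_def a2_def a3_def a4_def b1_def b2_def b3_def b4_def ..
    from c show "v \<in> FF p1 p2 ` set K11"
    proof (elim disjE)
      assume h: "((a1,b1),(a2,b2),(a3,b3),(a4,b4)) \<in> set K11"
      show ?thesis unfolding v'' using h by (rule imageI)
    next
      assume h: "((a2,b2),(a1,b1),(a3,b3),(a4,b4)) \<in> set K11"
      have "FF p1 p2 ((a1,b1),(a2,b2),(a3,b3),(a4,b4)) = FF p1 p2 ((a2,b2),(a1,b1),(a3,b3),(a4,b4))"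
        by (rule FF_swap(1)[symmetric])
      then show ?thesis unfolding v'' using h by (metis imageI)
    next
      assume h: "((a1,b1),(a2,b2),(a4,b4),(a3,b3)) \<in> set K11"
      have "FF p1 p2 ((a1,b1),(a2,b2),(a3,b3),(a4,b4)) = FF p1 p2 ((a1,b1),(a2,b2),(a4,b4),(a3,b3))"
        by (rule FF_swap(2)[symmetric])
      then show ?thesis unfolding v'' using h by (metis imageI)
    next
      assume h: "((a2,b2),(a1,b1),(a4,b4),(a3,b3)) \<in> set K11"
      have "FF p1 p2 ((a1,b1),(a2,b2),(a3,b3),(a4,b4)) = FF p1 p2 ((a2,b2),(a1,b1),(a4,b4),(a3,b3))"
        using FF_swap(1)[of p1 p2 "(a2,b2)" "(a1,b1)" "(a3,b3)" "(a4,b4)"]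
          FF_swap(2)[of p1 p2 "(a2,b2)" "(a1,b1)" "(a3,b3)" "(a4,b4)"] by simp
      then show ?thesis unfolding v'' using h by (metis imageI)
    qed
  qed
  have fin: "finite (FF p1 p2 ` set K11)" by simp
  have "card (FF p1 p2 ` set K11) \<le> 11"
  proof -
    have l: "length K11 = 11" by (simp add: K11_def Let_def)
    have "card (FF p1 p2 ` set K11) \<le> card (set K11)" by (rule card_image_le) simp
    also have "\<dots> \<le> length K11" by (rule card_length)
    finally show ?thesis using l by simp
  qed
  moreover have "finite (Smap p1 p2 ` {qq. admissible (p1*p2) qq})"
    using sub fin by (rule finite_subset)
  moreover have "card (Smap p1 p2 ` {qq. admissible (p1*p2) qq}) \<le> card (FF p1 p2 ` set K11)"
    using fin sub by (rule card_mono)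
  ultimately show ?thesis by linarith
qed

end
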